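(* Assume that $\mathfrak c$ is regular and that there exist $\mathfrak c$ pairwise incomparable selective ultrafilters on $\omega$. Then there exists $X$ with $\omega\subseteq X\subseteq\beta\omega$ such that $\omega^\alpha$ is relatively countably compact in $X^\alpha$ for each $\alpha<\mathfrak c$, but $\operatorname{CL}(X)$ is not pseudocompact.
   Context: $\beta\omega$ is the Stone–Čech compactification of the discrete space $\omega$ (ultrafilters on $\omega$). A free ultrafilter $q$ on $\omega$ is selective if for every partition of $\omega$ into pieces not in $q$ there is a set in $q$ meeting each piece in at most one point. Two ultrafilters $q_0,q_1$ on $\omega$ are incomparable if for every bijection $f:\omega\to\omega$, the ultrafilter generated by $\{f[A]:A\in q_0\}$ is not $q_1$. A subset $Y$ of a space $Z$ is relatively countably compact in $Z$ if every countably infinite subset of $Y$ has an accumulation point in $Z$. Powers carry the product topology. $\operatorname{CL}(X)$ is the set of nonempty closed subsets of $X$ with the Vietoris topology; pseudocompact means every continuous real-valued function is bounded. *)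

theory Defs
  imports "HOL-Analysis.Analysis" "HOL-Library.Disjoint_Sets"
begin

definition ultrafilter_on_nat :: "nat set set \<Rightarrow> bool" where
  "ultrafilter_on_nat U \<longleftrightarrow>
     UNIV \<in> U \<and> {} \<notin> U \<and>
     (\<forall>A B. A \<in> U \<and> B \<in> U \<longrightarrow> A \<inter> B \<in> U) \<and>
     (\<forall>A B. A \<in> U \<and> A \<subseteq> B \<longrightarrow> B \<in> U) \<and>
     (\<forall>A. A \<in> U \<or> - A \<in> U)"

definition beta_omega :: "nat set set set" where
  "beta_omega = {U. ultrafilter_on_nat U}"

text \<open>The principal ultrafilter at n; \<open>\<omega>\<close> is identified with the set of these.\<close>
definition principal_uf :: "nat \<Rightarrow> nat set set" where
  "principal_uf n = {A. n \<in> A}"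

definition omega_pts :: "nat set set set" where
  "omega_pts = range principal_uf"

definition beta_omega_top :: "nat set set topology" where
  "beta_omega_top = topology_generated_by {{U \<in> beta_omega. A \<in> U} | A. True}"

definition free_uf :: "nat set set \<Rightarrow> bool" where
  "free_uf q \<longleftrightarrow> ultrafilter_on_nat q \<and> (\<forall>A. finite A \<longrightarrow> A \<notin> q)"

definition selective :: "nat set set \<Rightarrow> bool" where
  "selective q \<longleftrightarrow> free_uf q \<and>
     (\<forall>P. partition_on UNIV P \<and> (\<forall>B\<in>P. B \<notin> q) \<longrightarrow>
        (\<exists>A\<in>q. \<forall>B\<in>P. card (A \<inter> B) \<le> 1 \<and> finite (A \<inter> B)))"

definition uf_image :: "(nat \<Rightarrow> nat) \<Rightarrow> nat set set \<Rightarrow> nat set set" where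
  "uf_image f q = {B. \<exists>A\<in>q. f ` A \<subseteq> B}"

definition incomparable :: "nat set set \<Rightarrow> nat set set \<Rightarrow> bool" where
  "incomparable q0 q1 \<longleftrightarrow> (\<forall>f. bij f \<longrightarrow> uf_image f q0 \<noteq> q1)"

definition rel_countably_compact :: "'a topology \<Rightarrow> 'a set \<Rightarrow> bool" where
  "rel_countably_compact Z Y \<longleftrightarrow> Y \<subseteq> topspace Z \<and>
     (\<forall>S. S \<subseteq> Y \<and> countable S \<and> infinite S \<longrightarrow> Z derived_set_of S \<noteq> {})"

definition CL :: "'a topology \<Rightarrow> 'a set set" where
  "CL T = {F. F \<noteq> {} \<and> closedin T F}"

definition vietoris :: "'a topology \<Rightarrow> 'a set topology" where
  "vietoris T = topology_generated_by
     ({{F \<in> CL T. F \<subseteq> U} | U. openin T U} \<union> {{F \<in> CL T. F \<inter> U \<noteq> {}} | U. openin T U})"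

definition pseudocompact :: "'a topology \<Rightarrow> bool" where
  "pseudocompact T \<longleftrightarrow> (\<forall>f. continuous_map T euclideanreal f \<longrightarrow> bounded (f ` topspace T))"

end

theory Submission
  imports Defs "HOL-Library.Equipollence"
begin

abbreviation uf where "uf \<equiv> ultrafilter_on_nat"

lemma uf_upclosed: "uf U \<Longrightarrow> A \<in> U \<Longrightarrow> A \<subseteq> B \<Longrightarrow> B \<in> U"
  unfolding ultrafilter_on_nat_def by blast
lemma uf_Int: "uf U \<Longrightarrow> A \<in> U \<Longrightarrow> B \<in> U \<Longrightarrow> A \<inter> B \<in> U"
  unfolding ultrafilter_on_nat_def by blast
lemma uf_empty: "uf U \<Longrightarrow> {} \<notin> U"
  unfolding ultrafilter_on_nat_def by blast
lemma uf_UNIV: "uf U \<Longrightarrow> UNIV \<in> U"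
  unfolding ultrafilter_on_nat_def by blast
lemma uf_compl: "uf U \<Longrightarrow> A \<notin> U \<Longrightarrow> - A \<in> U"
  unfolding ultrafilter_on_nat_def by blast
lemma uf_compl_iff: "uf U \<Longrightarrow> - A \<in> U \<longleftrightarrow> A \<notin> U"
proof -
  assume u: "uf U"
  show ?thesis
  proof
    assume "- A \<in> U"
    show "A \<notin> U"
    proof
      assume "A \<in> U"
      then have "A \<inter> - A \<in> U" using uf_Int[OF u] \<open>- A \<in> U\<close> by blast
      then show False using uf_empty[OF u] by simp
    qed
  next
    assume "A \<notin> U" then show "- A \<in> U" by (rule uf_compl[OF u])
  qed
qed

lemma uf_principal: "uf (principal_uf n)"
  unfolding ultrafilter_on_nat_def principal_uf_def by auto


lemma principal_mem[simp]: "A \<in> principal_uf n \<longleftrightarrow> n \<in> A"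
  by (simp add: principal_uf_def)

lemma uf_image_mem: "uf q \<Longrightarrow> B \<in> uf_image f q \<longleftrightarrow> f -` B \<in> q"
proof -
  assume u: "uf q"
  show ?thesis
  proof
    assume "B \<in> uf_image f q"
    then obtain A where "A \<in> q" "f ` A \<subseteq> B" unfolding uf_image_def by blast
    then have "A \<subseteq> f -` B" by auto
    then show "f -` B \<in> q" by (rule uf_upclosed[OF u \<open>A \<in> q\<close>])
  next
    assume a: "f -` B \<in> q"
    have "f ` (f -` B) \<subseteq> B" by (rule image_vimage_subset)
    then show "B \<in> uf_image f q" unfolding uf_image_def using a by auto
  qed
qed

lemma principal_uf_inj: "inj principal_uf"
proof (rule injI)
  fix x y assume "principal_uf x = principal_uf y"
  then have "{x} \<in> principal_uf y" by (metis principal_mem singletonI)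
  then show "x = y" by simp
qed

lemma uf_image_eq: "uf q \<Longrightarrow> uf_image f q = {B. f -` B \<in> q}"
  by (rule set_eqI) (simp add: uf_image_mem)

lemma uf_image_uf: assumes u: "uf q" shows "uf (uf_image f q)"
proof -
  have h1: "UNIV \<in> {B. f -` B \<in> q}" using uf_UNIV[OF u] by simp
  have h2: "{} \<notin> {B. f -` B \<in> q}" using uf_empty[OF u] by simp
  have h3: "\<forall>A B. A \<in> {B. f -` B \<in> q} \<and> B \<in> {B. f -` B \<in> q} \<longrightarrow> A \<inter> B \<in> {B. f -` B \<in> q}"
    using uf_Int[OF u] by (simp add: vimage_Int)
  have h4: "\<forall>A B. A \<in> {B. f -` B \<in> q} \<and> A \<subseteq> B \<longrightarrow> B \<in> {B. f -` B \<in> q}"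
  proof (intro allI impI)
    fix A B assume "A \<in> {B. f -` B \<in> q} \<and> A \<subseteq> B"
    then show "B \<in> {B. f -` B \<in> q}" using uf_upclosed[OF u, of "f -` A" "f -` B"] by auto
  qed
  have h5: "\<forall>A. A \<in> {B. f -` B \<in> q} \<or> - A \<in> {B. f -` B \<in> q}"
    using uf_compl[OF u] by (simp add: vimage_Compl) blast
  show ?thesis unfolding uf_image_eq[OF u] ultrafilter_on_nat_def
    by (rule conjI[OF h1 conjI[OF h2 conjI[OF h3 conjI[OF h4 h5]]]])
qed

lemma uf_image_comp: "uf_image f (uf_image g q) = uf_image (f \<circ> g) q"
proof
  show "uf_image f (uf_image g q) \<subseteq> uf_image (f \<circ> g) q"
  proof
    fix B assume "B \<in> uf_image f (uf_image g q)"
    then obtain A' where A': "A' \<in> uf_image g q" "f ` A' \<subseteq> B" unfolding uf_image_def by blast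
    then obtain A where A: "A \<in> q" "g ` A \<subseteq> A'" unfolding uf_image_def by blast
    have "(f \<circ> g) ` A \<subseteq> B" using A A' by (auto simp: image_comp[symmetric])
    then show "B \<in> uf_image (f \<circ> g) q" using A(1) unfolding uf_image_def by blast
  qed
next
  show "uf_image (f \<circ> g) q \<subseteq> uf_image f (uf_image g q)"
  proof
    fix B assume "B \<in> uf_image (f \<circ> g) q"
    then obtain A where A: "A \<in> q" "(f \<circ> g) ` A \<subseteq> B" unfolding uf_image_def by blast
    have "g ` A \<in> uf_image g q" using A(1) unfolding uf_image_def by blast
    moreover have "f ` (g ` A) \<subseteq> B" using A(2) by (simp add: image_comp)
    ultimately show "B \<in> uf_image f (uf_image g q)" unfolding uf_image_def by blast
  qed
qed

lemma uf_maximal: assumes "uf a" "uf b" "a \<subseteq> b" shows "a = b"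
proof
  show "b \<subseteq> a"
  proof
    fix B assume "B \<in> b"
    show "B \<in> a"
    proof (rule ccontr)
      assume "B \<notin> a"
      then have "- B \<in> b" using uf_compl[OF assms(1)] assms(3) by blast
      then show False using uf_compl_iff[OF assms(2)] \<open>B \<in> b\<close> by blast
    qed
  qed
qed (rule assms(3))

lemma uf_singleton: "uf x \<Longrightarrow> {a} \<in> x \<Longrightarrow> x = principal_uf a"
proof (rule uf_maximal[symmetric, OF uf_principal], assumption)
  assume u: "uf x" and a: "{a} \<in> x"
  show "principal_uf a \<subseteq> x"
  proof
    fix A assume "A \<in> principal_uf a"
    then have "{a} \<subseteq> A" by simp
    then show "A \<in> x" using uf_upclosed[OF u a] by blast
  qed
qed

lemma uf_finite_principal:
  assumes "uf x" "finite A" "A \<in> x" shows "\<exists>a\<in>A. x = principal_uf a"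
  using assms(2,3)
proof (induction A rule: finite_induct)
  case empty then show ?case using uf_empty[OF assms(1)] by simp
next
  case (insert a A)
  show ?case
  proof (cases "{a} \<in> x")
    case True then show ?thesis using uf_singleton[OF assms(1)] by blast
  next
    case False
    then have "- {a} \<in> x" using uf_compl[OF assms(1)] by blast
    then have "insert a A \<inter> - {a} \<in> x" by (rule uf_Int[OF assms(1) insert.prems])
    then have "A \<in> x" by (rule uf_upclosed[OF assms(1)]) auto
    then show ?thesis using insert by blast
  qed
qed

lemma free_ufI: "uf x \<Longrightarrow> x \<notin> omega_pts \<Longrightarrow> free_uf x"
proof -
  assume u: "uf x" and n: "x \<notin> omega_pts"
  have "A \<notin> x" if fA: "finite A" for A
  proof
    assume "A \<in> x"
    then obtain a where "x = principal_uf a" using uf_finite_principal[OF u fA] by blast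
    then show False using n by (simp add: omega_pts_def)
  qed
  then show ?thesis using u by (simp add: free_uf_def)
qed

lemma free_not_principal: "free_uf x \<Longrightarrow> x \<notin> omega_pts"
  unfolding free_uf_def omega_pts_def by (auto simp: principal_uf_def)

lemma free_infinite: "free_uf x \<Longrightarrow> A \<in> x \<Longrightarrow> infinite A"
  unfolding free_uf_def by blast

lemma free_uf_uf: "free_uf x \<Longrightarrow> uf x"
  unfolding free_uf_def by blast

lemma uf_restrict: "uf p \<Longrightarrow> Z \<in> p \<Longrightarrow> A \<in> p \<longleftrightarrow> A \<inter> Z \<in> p"
proof -
  assume u: "uf p" and z: "Z \<in> p"
  show ?thesis
  proof
    assume "A \<in> p" then show "A \<inter> Z \<in> p" by (rule uf_Int[OF u _ z])
  next
    assume "A \<inter> Z \<in> p" then show "A \<in> p" by (rule uf_upclosed[OF u]) auto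
  qed
qed

lemma uf_INT_finite: assumes "uf q" "finite J" "\<And>i. i \<in> J \<Longrightarrow> P i \<in> q" shows "(\<Inter>i\<in>J. P i) \<in> q"
  using assms(2,3)
proof (induction J rule: finite_induct)
  case empty then show ?case using uf_UNIV[OF assms(1)] by simp
next
  case (insert a F)
  then have "P a \<in> q" "(\<Inter>i\<in>F. P i) \<in> q" by auto
  then have "P a \<inter> (\<Inter>i\<in>F. P i) \<in> q" by (rule uf_Int[OF assms(1)])
  then show ?case by simp
qed

definition bo :: "nat set \<Rightarrow> nat set set set" where
  "bo A = {U \<in> beta_omega. A \<in> U}"

lemma beta_top_eq: "beta_omega_top = topology_generated_by {bo A | A. True}"
  unfolding beta_omega_top_def bo_def by simp

lemma topspace_beta: "topspace beta_omega_top = beta_omega"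
proof -
  have "\<Union>{bo A | A. True} = beta_omega"
  proof
    show "\<Union>{bo A | A. True} \<subseteq> beta_omega" unfolding bo_def by blast
    show "beta_omega \<subseteq> \<Union>{bo A | A. True}"
    proof
      fix U assume "U \<in> beta_omega"
      then have "U \<in> bo UNIV" unfolding bo_def beta_omega_def using uf_UNIV by auto
      then show "U \<in> \<Union>{bo A | A. True}" by blast
    qed
  qed
  then show ?thesis unfolding beta_top_eq topology_generated_by_topspace by simp
qed

lemma openin_bo: "openin beta_omega_top (bo A)"
  unfolding beta_top_eq openin_topology_generated_by_iff
  by (rule generate_topology_on.Basis) blast

lemma bo_Int: "bo A \<inter> bo B \<supseteq> bo (A \<inter> B)"
  unfolding bo_def beta_omega_def using uf_upclosed by blast

lemma openin_beta_basic:
  assumes "openin beta_omega_top V" "y \<in> V"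
  shows "\<exists>A\<in>y. bo A \<subseteq> V"
proof -
  have y: "y \<in> beta_omega" using assms openin_subset topspace_beta by blast
  have g: "generate_topology_on {bo A | A. True} V"
    using assms(1) unfolding beta_top_eq openin_topology_generated_by_iff .
  have "\<forall>y\<in>V. y \<in> beta_omega \<longrightarrow> (\<exists>A\<in>y. bo A \<subseteq> V)"
    using g
  proof (induction rule: generate_topology_on.induct)
    case Empty then show ?case by simp
  next
    case (Int a b)
    show ?case
    proof (intro ballI impI)
      fix y assume "y \<in> a \<inter> b" "y \<in> beta_omega"
      then obtain A B where AB: "A \<in> y" "bo A \<subseteq> a" "B \<in> y" "bo B \<subseteq> b" using Int.IH by blast
      have "A \<inter> B \<in> y" using uf_Int AB \<open>y \<in> beta_omega\<close> unfolding beta_omega_def by blast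
      moreover have "bo (A \<inter> B) \<subseteq> a \<inter> b" using bo_Int AB by blast
      ultimately show "\<exists>A\<in>y. bo A \<subseteq> a \<inter> b" by blast
    qed
  next
    case (UN K)
    show ?case
    proof (intro ballI impI)
      fix y assume "y \<in> \<Union>K" "y \<in> beta_omega"
      then obtain k where k: "k \<in> K" "y \<in> k" by blast
      then obtain A where "A \<in> y" "bo A \<subseteq> k" using UN.IH \<open>y \<in> beta_omega\<close> by blast
      then show "\<exists>A\<in>y. bo A \<subseteq> \<Union>K" using k by blast
    qed
  next
    case (Basis s)
    then obtain C where C: "s = bo C" by blast
    show ?case
    proof (intro ballI impI)
      fix y assume "y \<in> s" "y \<in> beta_omega"
      then have "C \<in> y" using C unfolding bo_def by blast
      then show "\<exists>A\<in>y. bo A \<subseteq> s" using C by blast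
    qed
  qed
  then show ?thesis using assms(2) y by blast
qed

lemma topspace_sub: "X \<subseteq> beta_omega \<Longrightarrow> topspace (subtopology beta_omega_top X) = X"
  by (simp add: topspace_beta Int_absorb1)

lemma openin_sub_bo: "openin (subtopology beta_omega_top X) (bo A \<inter> X)"
  by (simp add: openin_subtopology_Int openin_bo)

lemma openin_sub_basic:
  assumes "openin (subtopology beta_omega_top X) V" "y \<in> V"
  shows "\<exists>A\<in>y. bo A \<inter> X \<subseteq> V"
proof -
  obtain V' where V': "openin beta_omega_top V'" "V = V' \<inter> X"
    using assms(1) by (auto simp: openin_subtopology)
  then obtain A where "A \<in> y" "bo A \<subseteq> V'" using openin_beta_basic assms(2) by blast
  then show ?thesis using V' by blast
qed

lemma bo_X_eq: "X \<subseteq> beta_omega \<Longrightarrow> bo A \<inter> X = {U \<in> X. A \<in> U}"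
  unfolding bo_def by blast

lemma principal_in_beta: "principal_uf n \<in> beta_omega"
  unfolding beta_omega_def using uf_principal by simp

lemma omega_sub_beta: "omega_pts \<subseteq> beta_omega"
  unfolding omega_pts_def using principal_in_beta by blast

lemma part_a:
  fixes I :: "'i set"
  assumes Xsub: "X \<subseteq> beta_omega" and Xom: "omega_pts \<subseteq> X"
    and lim: "\<And>h :: 'i \<Rightarrow> nat \<Rightarrow> nat. \<exists>q. free_uf q \<and> (\<forall>i\<in>I. uf_image (h i) q \<in> X)"
  shows "rel_countably_compact (product_topology (\<lambda>_. subtopology beta_omega_top X) I) (PiE I (\<lambda>_. omega_pts))"
  unfolding rel_countably_compact_def
proof (intro conjI allI impI)
  let ?T = "subtopology beta_omega_top X"
  have tsp: "topspace ?T = X" using topspace_sub[OF Xsub] .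
  have tp: "topspace (product_topology (\<lambda>_. ?T) I) = PiE I (\<lambda>_. X)" using tsp by simp
  show "PiE I (\<lambda>_. omega_pts) \<subseteq> topspace (product_topology (\<lambda>_. ?T) I)"
    using Xom PiE_mono[of I "\<lambda>_. omega_pts" "\<lambda>_. X"] tp by simp
  fix S assume S: "S \<subseteq> PiE I (\<lambda>_. omega_pts) \<and> countable S \<and> infinite S"
  define e where "e = from_nat_into S"
  have e: "bij_betw e UNIV S" unfolding e_def using S bij_betw_from_nat_into by blast
  have eS: "e n \<in> S" for n using e bij_betwE by blast
  have einj: "e n1 = e n2 \<Longrightarrow> n1 = n2" for n1 n2 using e unfolding bij_betw_def inj_def by blast
  define h where "h i n = (SOME k. e n i = principal_uf k)" for i n
  have h: "e n i = principal_uf (h i n)" if "i \<in> I" for i n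
  proof -
    have "e n i \<in> omega_pts" using eS S that by blast
    then have "\<exists>k. e n i = principal_uf k" unfolding omega_pts_def by blast
    then show ?thesis unfolding h_def by (rule someI_ex)
  qed
  obtain q where q: "free_uf q" "\<And>i. i \<in> I \<Longrightarrow> uf_image (h i) q \<in> X" using lim[of h] by blast
  have uq: "uf q" using q(1) free_uf_uf by blast
  define y where "y = restrict (\<lambda>i. uf_image (h i) q) I"
  have yT: "y \<in> topspace (product_topology (\<lambda>_. ?T) I)"
    unfolding y_def tp restrict_PiE_iff using q(2) by blast
  have "y \<in> product_topology (\<lambda>_. ?T) I derived_set_of S"
  proof (rule in_derived_set_of[THEN iffD2], rule conjI[OF yT], intro allI impI)
    fix T assume T: "y \<in> T \<and> openin (product_topology (\<lambda>_. ?T) I) T"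
    have "\<exists>U. finite {i \<in> I. U i \<noteq> topspace ?T} \<and> (\<forall>i\<in>I. openin ?T (U i)) \<and> y \<in> PiE I U \<and> PiE I U \<subseteq> T"
      using T[THEN conjunct2, unfolded openin_product_topology_alt] T[THEN conjunct1] by (rule bspec)
    then obtain U where U: "finite {i \<in> I. U i \<noteq> topspace ?T}" "\<And>i. i \<in> I \<Longrightarrow> openin ?T (U i)"
      "y \<in> PiE I U" "PiE I U \<subseteq> T"
      by blast
    define J where "J = {i \<in> I. U i \<noteq> X}"
    have fJ: "finite J" using U(1) unfolding J_def tsp .
    define Af where "Af i = (SOME A. A \<in> y i \<and> bo A \<inter> X \<subseteq> U i)" for i
    have Af: "Af i \<in> y i \<and> bo (Af i) \<inter> X \<subseteq> U i" if "i \<in> I" for i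
    proof -
      have "y i \<in> U i" using U(3) that by blast
      then have "\<exists>A. A \<in> y i \<and> bo A \<inter> X \<subseteq> U i" using openin_sub_basic[OF U(2)[OF that]] by blast
      then show ?thesis unfolding Af_def by (rule someI_ex)
    qed
    define C where "C = (\<Inter>i\<in>J. h i -` Af i)"
    have "C \<in> q" unfolding C_def
    proof (rule uf_INT_finite[OF uq fJ])
      fix i assume "i \<in> J"
      then have iI: "i \<in> I" unfolding J_def by blast
      then have "Af i \<in> uf_image (h i) q" using Af[OF iI] unfolding y_def by simp
      then show "h i -` Af i \<in> q" using uf_image_mem[OF uq] by blast
    qed
    then have Cinf: "infinite C" using free_infinite q(1) by blast
    have "\<exists>n\<in>C. e n \<noteq> y"
    proof -
      obtain n1 where n1: "n1 \<in> C" using Cinf by (metis finite.emptyI ex_in_conv)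
      have "infinite (C - {n1})" using Cinf by simp
      then obtain n2 where n2: "n2 \<in> C - {n1}" by (metis finite.emptyI ex_in_conv)
      show ?thesis
      proof (cases "e n1 = y")
        case True
        then have "e n2 \<noteq> y" using n2 einj by blast
        then show ?thesis using n2 by blast
      next
        case False then show ?thesis using n1 by blast
      qed
    qed
    then obtain n where n: "n \<in> C" "e n \<noteq> y" by blast
    have "e n \<in> PiE I U"
    proof (rule PiE_I)
      fix i assume iI: "i \<in> I"
      show "e n i \<in> U i"
      proof (cases "i \<in> J")
        case True
        then have "n \<in> h i -` Af i" using n(1) unfolding C_def by blast
        then have "Af i \<in> e n i" using h[OF iI] by simp
        moreover have "e n i \<in> X" using h[OF iI] Xom unfolding omega_pts_def by blast
        moreover have "e n i \<in> beta_omega" using h[OF iI] principal_in_beta by simp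
        ultimately have "e n i \<in> bo (Af i) \<inter> X" unfolding bo_def by blast
        then show ?thesis using Af[OF iI] by blast
      next
        case False
        then have "U i = X" using iI unfolding J_def by blast
        then show ?thesis using h[OF iI] Xom unfolding omega_pts_def by auto
      qed
    next
      fix i assume "i \<notin> I"
      have "e n \<in> PiE I (\<lambda>_. omega_pts)" using eS S by blast
      then show "e n i = undefined" using \<open>i \<notin> I\<close> by (rule PiE_arb)
    qed
    then show "\<exists>z. z \<noteq> y \<and> z \<in> S \<and> z \<in> T" using n(2) eS U(4) by blast
  qed
  then show "product_topology (\<lambda>_. ?T) I derived_set_of S \<noteq> {}" by blast
qed

lemma selective_free: "selective q \<Longrightarrow> free_uf q"
  unfolding selective_def by blast

lemma selective_inj:
  assumes sel: "selective p" and fr: "free_uf (uf_image u p)"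
  shows "\<exists>Z\<in>p. inj_on u Z"
proof -
  have up: "uf p" using selective_free[OF sel] free_uf_uf by blast
  define P where "P = (\<lambda>k. u -` {k}) ` range u"
  have part: "partition_on UNIV P"
  proof (rule partition_onI)
    show "\<Union>P = UNIV" unfolding P_def by auto
  next
    fix a b assume "a \<in> P" "b \<in> P" "a \<noteq> b"
    then show "disjnt a b" unfolding P_def disjnt_def by auto
  next
    show "{} \<notin> P" unfolding P_def by auto
  qed
  have notin: "\<forall>B\<in>P. B \<notin> p"
  proof
    fix B assume "B \<in> P"
    then obtain k where k: "B = u -` {k}" unfolding P_def by blast
    show "B \<notin> p"
    proof
      assume "B \<in> p"
      then have "{k} \<in> uf_image u p" using uf_image_mem[OF up] k by simp
      then show False using fr unfolding free_uf_def by blast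
    qed
  qed
  obtain A where A: "A \<in> p" "\<forall>B\<in>P. card (A \<inter> B) \<le> 1 \<and> finite (A \<inter> B)"
    using sel part notin unfolding selective_def by blast
  have "inj_on u A"
  proof (rule inj_onI)
    fix x y assume xy: "x \<in> A" "y \<in> A" "u x = u y"
    have "u -` {u x} \<in> P" unfolding P_def by blast
    then have c: "card (A \<inter> u -` {u x}) \<le> 1" "finite (A \<inter> u -` {u x})" using A(2) by blast+
    have "x \<in> A \<inter> u -` {u x}" "y \<in> A \<inter> u -` {u x}" using xy by auto
    then show "x = y" using c card_le_Suc0_iff_eq[OF c(2)] by auto
  qed
  then show ?thesis using A(1) by blast
qed

lemma split_infinite:
  fixes Z :: "nat set"
  assumes up: "uf p" and Z: "Z \<in> p" "infinite Z"
  shows "\<exists>Z1 Z2. Z1 \<in> p \<and> Z1 \<subseteq> Z \<and> Z2 \<subseteq> Z \<and> Z1 \<inter> Z2 = {} \<and> infinite Z2"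
proof -
  define E where "E = enumerate Z"
  have Einj: "inj E" unfolding E_def using inj_enumerate Z(2) by blast
  have Erange: "range E = Z" unfolding E_def using bij_betw_imp_surj_on[OF bij_enumerate[OF Z(2)]] .
  define Ze where "Ze = E ` {n. even n}"
  define Zo where "Zo = E ` {n. odd n}"
  have ie: "{n::nat. even n} = range (\<lambda>n. 2 * n)" by (auto elim: evenE)
  have io: "{n::nat. odd n} = range (\<lambda>n. 2 * n + 1)" by (auto elim: oddE)
  have "inj (\<lambda>n::nat. 2 * n)" by (rule injI) simp
  then have infe: "infinite {n::nat. even n}" unfolding ie using finite_imageD by blast
  have "inj (\<lambda>n::nat. 2 * n + 1)" by (rule injI) simp
  then have info: "infinite {n::nat. odd n}" unfolding io using finite_imageD by blast
  have Zeinf: "infinite Ze" unfolding Ze_def using infe finite_imageD Einj by (metis inj_on_subset subset_UNIV)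
  have Zoinf: "infinite Zo" unfolding Zo_def using info finite_imageD Einj by (metis inj_on_subset subset_UNIV)
  have disj: "Ze \<inter> Zo = {}" unfolding Ze_def Zo_def using Einj unfolding inj_def by auto
  have un: "Ze \<union> Zo = Z" unfolding Ze_def Zo_def using Erange by auto
  show ?thesis
  proof (cases "Ze \<in> p")
    case True
    then show ?thesis using disj un Zoinf by blast
  next
    case False
    then have "- Ze \<in> p" using uf_compl[OF up] by blast
    then have "Z \<inter> - Ze \<in> p" using uf_Int[OF up Z(1)] by blast
    moreover have "Z \<inter> - Ze \<subseteq> Zo" using un by blast
    ultimately have "Zo \<in> p" by (rule uf_upclosed[OF up])
    then show ?thesis using disj un Zeinf by blast
  qed
qed

lemma inj_to_bij:
  assumes fr: "free_uf p" and Z: "Z \<in> p" and inj: "inj_on w Z"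
  shows "\<exists>f. bij f \<and> uf_image f p = uf_image w p"
proof -
  have up: "uf p" using fr free_uf_uf by blast
  have Zinf: "infinite Z" using free_infinite fr Z by blast
  obtain Z1 Z2 where Z12: "Z1 \<in> p" "Z1 \<subseteq> Z" "Z2 \<subseteq> Z" "Z1 \<inter> Z2 = {}" "infinite Z2"
    using split_infinite[OF up Z Zinf] by blast
  define D1 where "D1 = - Z1"
  define D2 where "D2 = - (w ` Z1)"
  have D1inf: "infinite D1" using Z12 unfolding D1_def by (metis finite_subset disjoint_eq_subset_Compl inf_commute)
  have "w ` Z2 \<subseteq> D2"
  proof
    fix x assume "x \<in> w ` Z2"
    then obtain a where a: "a \<in> Z2" "x = w a" by blast
    show "x \<in> D2"
    proof (rule ccontr)
      assume "x \<notin> D2"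
      then obtain b where b: "b \<in> Z1" "x = w b" unfolding D2_def by blast
      then have "a = b" using inj a Z12 unfolding inj_on_def by blast
      then show False using a b Z12 by blast
    qed
  qed
  moreover have "infinite (w ` Z2)" using Z12 inj finite_imageD inj_on_subset by metis
  ultimately have D2inf: "infinite D2" using finite_subset by blast
  have b1: "bij_betw (from_nat_into D1) UNIV D1" using D1inf by (simp add: bij_betw_from_nat_into)
  have b2: "bij_betw (from_nat_into D2) UNIV D2" using D2inf by (simp add: bij_betw_from_nat_into)
  define k where "k = from_nat_into D2 \<circ> inv_into UNIV (from_nat_into D1)"
  have bk: "bij_betw k D1 D2" unfolding k_def using bij_betw_trans[OF bij_betw_inv_into[OF b1] b2] .
  define f where "f x = (if x \<in> Z1 then w x else k x)" for x
  have bw: "bij_betw w Z1 (w ` Z1)" using inj_on_subset[OF inj Z12(2)] by (rule bij_betw_imageI) simp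
  have bf1: "bij_betw f Z1 (w ` Z1)" using bw by (rule bij_betw_cong[THEN iffD1, rotated]) (simp add: f_def)
  have bf2: "bij_betw f D1 D2" using bk by (rule bij_betw_cong[THEN iffD1, rotated]) (simp add: f_def D1_def)
  have "bij_betw f (Z1 \<union> D1) (w ` Z1 \<union> D2)"
    by (rule bij_betw_combine[OF bf1 bf2]) (auto simp: D2_def)
  moreover have "Z1 \<union> D1 = UNIV" "w ` Z1 \<union> D2 = UNIV" unfolding D1_def D2_def by auto
  ultimately have bf: "bij f" by simp
  have "uf_image f p = uf_image w p"
  proof (rule set_eqI)
    fix B
    have "f -` B \<inter> Z1 = w -` B \<inter> Z1" unfolding f_def by auto
    then have "f -` B \<in> p \<longleftrightarrow> w -` B \<in> p" using uf_restrict[OF up Z12(1)] by metis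
    then show "B \<in> uf_image f p \<longleftrightarrow> B \<in> uf_image w p" using uf_image_mem[OF up] by simp
  qed
  then show ?thesis using bf by blast
qed

lemma key_lemma:
  assumes sp: "selective p" and sp': "selective p'"
    and eq: "uf_image u p = uf_image v p'" and fr: "free_uf (uf_image u p)"
  shows "\<exists>f. bij f \<and> uf_image f p = p'"
proof -
  have up: "uf p" and up': "uf p'" and fp: "free_uf p"
    using selective_free[OF sp] selective_free[OF sp'] free_uf_uf by blast+
  define r where "r = uf_image u p"
  have ur: "uf r" unfolding r_def using uf_image_uf[OF up] .
  obtain Z where Z: "Z \<in> p" "inj_on u Z" using selective_inj[OF sp fr] by blast
  obtain Z' where Z': "Z' \<in> p'" "inj_on v Z'" using selective_inj[OF sp' fr[unfolded eq]] by blast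
  have img: "v ` (B \<inter> Z') \<in> r" if "B \<in> p'" for B
  proof -
    have "B \<inter> Z' \<in> p'" using uf_Int[OF up' that Z'(1)] .
    moreover have "B \<inter> Z' \<subseteq> v -` (v ` (B \<inter> Z'))" by blast
    ultimately have "v -` (v ` (B \<inter> Z')) \<in> p'" by (rule uf_upclosed[OF up'])
    then show ?thesis unfolding r_def eq using uf_image_mem[OF up'] by blast
  qed
  define Z2 where "Z2 = Z \<inter> u -` (v ` Z')"
  have "v ` (UNIV \<inter> Z') \<in> r" using img uf_UNIV[OF up'] by blast
  then have "u -` (v ` Z') \<in> p" unfolding r_def using uf_image_mem[OF up] by simp
  then have Z2p: "Z2 \<in> p" unfolding Z2_def using uf_Int[OF up Z(1)] by blast
  define w where "w = inv_into Z' v \<circ> u"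
  have injw: "inj_on w Z2"
  proof (rule inj_onI)
    fix x y assume xy: "x \<in> Z2" "y \<in> Z2" "w x = w y"
    have "u x \<in> v ` Z'" "u y \<in> v ` Z'" using xy unfolding Z2_def by auto
    then have "u x = u y" using xy(3) unfolding w_def by (metis comp_apply f_inv_into_f)
    then show "x = y" using Z(2) xy unfolding Z2_def inj_on_def by blast
  qed
  have "p' \<subseteq> uf_image w p"
  proof
    fix B assume B: "B \<in> p'"
    define C where "C = Z2 \<inter> u -` (v ` (B \<inter> Z'))"
    have "u -` (v ` (B \<inter> Z')) \<in> p" using img[OF B] unfolding r_def using uf_image_mem[OF up] by simp
    then have Cp: "C \<in> p" unfolding C_def using uf_Int[OF up Z2p] by blast
    have "C \<subseteq> w -` B"
    proof
      fix z assume "z \<in> C"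
      then obtain b where b: "b \<in> B" "b \<in> Z'" "u z = v b" unfolding C_def by blast
      then have "w z = b" unfolding w_def using Z'(2) by (simp add: inv_into_f_f)
      then show "z \<in> w -` B" using b by simp
    qed
    then have "w -` B \<in> p" using uf_upclosed[OF up Cp] by blast
    then show "B \<in> uf_image w p" using uf_image_mem[OF up] by simp
  qed
  then have "p' = uf_image w p" using uf_maximal[OF up' uf_image_uf[OF up]] by blast
  moreover obtain f where "bij f" "uf_image f p = uf_image w p" using inj_to_bij[OF fp Z2p injw] by blast
  ultimately show ?thesis by auto
qed

definition dec :: "nat \<Rightarrow> bool list" where "dec = from_nat_into UNIV"
definition lenp :: "nat \<Rightarrow> nat" where "lenp m = length (dec m)"
definition Jn :: "nat \<Rightarrow> nat set" where "Jn n = {m. lenp m = n}"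
definition Dn :: "nat \<Rightarrow> nat set set set" where "Dn n = principal_uf ` Jn n"
definition br :: "nat set \<Rightarrow> nat \<Rightarrow> nat" where "br x n = inv dec (map (\<lambda>k. k \<in> x) [0..<n])"

lemma bij_dec: "bij dec"
  unfolding dec_def by (rule bij_betw_from_nat_into) (auto simp: infinite_UNIV_listI)

lemma dec_inv: "dec (inv dec l) = l"
  using bij_dec by (simp add: bij_is_surj surj_f_inv_f)

lemma lenp_br: "lenp (br x n) = n"
  unfolding lenp_def br_def dec_inv by simp

lemma br_Jn: "br x n \<in> Jn n"
  unfolding Jn_def using lenp_br by simp

lemma finite_lenp_vimage:
  assumes "finite K" shows "finite (lenp -` K)"
proof -
  have "lenp -` K = dec -` {l. length l \<in> K}" unfolding lenp_def by auto
  moreover have "{l :: bool list. length l \<in> K} \<subseteq> {xs. set xs \<subseteq> UNIV \<and> length xs \<le> Max K}"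
    using assms by auto
  then have "finite {l :: bool list. length l \<in> K}"
    using finite_lists_length_le[of "UNIV :: bool set" "Max K"] finite_subset by auto
  ultimately show ?thesis using finite_vimageI bij_dec bij_is_inj by metis
qed

lemma finite_Jn: "finite (Jn n)"
proof -
  have "Jn n = lenp -` {n}" unfolding Jn_def by auto
  then show ?thesis using finite_lenp_vimage by simp
qed

lemma Jn_ne: "Jn n \<noteq> {}" using br_Jn by blast

lemma card_Jn: "card (Jn n) = 2 ^ n"
proof -
  have "bij_betw dec (Jn n) {xs. set xs \<subseteq> UNIV \<and> length xs = n}"
  proof (rule bij_betw_subset[OF bij_dec])
    show "Jn n \<subseteq> UNIV" by simp
    show "dec ` Jn n = {xs. set xs \<subseteq> UNIV \<and> length xs = n}"
    proof (rule set_eqI)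
      fix l :: "bool list"
      have "l = dec (inv dec l)" using dec_inv by simp
      then show "l \<in> dec ` Jn n \<longleftrightarrow> l \<in> {xs. set xs \<subseteq> UNIV \<and> length xs = n}"
        unfolding Jn_def lenp_def by (metis (mono_tags, lifting) image_iff mem_Collect_eq top_greatest)
    qed
  qed
  then have "card (Jn n) = card {xs :: bool list. set xs \<subseteq> UNIV \<and> length xs = n}"
    by (rule bij_betw_same_card)
  also have "\<dots> = 2 ^ n" using card_lists_length_eq[of "UNIV :: bool set" n] by simp
  finally show ?thesis .
qed

lemma card_Dn: "card (Dn n) = 2 ^ n"
  unfolding Dn_def using card_Jn card_image principal_uf_inj inj_on_subset subset_UNIV by metis

lemma Dn_omega: "Dn n \<subseteq> omega_pts"
  unfolding Dn_def omega_pts_def by blast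

lemma Dn_ne: "Dn n \<noteq> {}"
  unfolding Dn_def using Jn_ne by blast

lemma principal_in_Dn: "principal_uf a \<in> Dn n \<longleftrightarrow> lenp a = n"
  unfolding Dn_def Jn_def using principal_uf_inj unfolding inj_def by auto

lemma free_image_lenp:
  assumes "free_uf y" shows "free_uf (uf_image lenp y)"
proof -
  have uy: "uf y" using assms free_uf_uf by blast
  have "A \<notin> uf_image lenp y" if "finite A" for A
  proof
    assume "A \<in> uf_image lenp y"
    then have "lenp -` A \<in> y" using uf_image_mem[OF uy] by simp
    then show False using free_infinite[OF assms] finite_lenp_vimage[OF that] by blast
  qed
  then show ?thesis unfolding free_uf_def using uf_image_uf[OF uy] by blast
qed

lemma br_eq: "br x n = br x' n \<Longrightarrow> k < n \<Longrightarrow> (k \<in> x \<longleftrightarrow> k \<in> x')"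
proof -
  assume e: "br x n = br x' n" and k: "k < n"
  have "map (\<lambda>k. k \<in> x) [0..<n] = map (\<lambda>k. k \<in> x') [0..<n]"
    using arg_cong[OF e, of dec] unfolding br_def dec_inv .
  then have "map (\<lambda>k. k \<in> x) [0..<n] ! k = map (\<lambda>k. k \<in> x') [0..<n] ! k" by (rule arg_cong)
  then show ?thesis using k by simp
qed

lemma branch_unique:
  assumes fy: "free_uf y" and a: "range (br x) \<in> y" and b: "range (br x') \<in> y"
  shows "x = x'"
proof -
  have uy: "uf y" using fy free_uf_uf by blast
  define R where "R = range (br x) \<inter> range (br x')"
  have "R \<in> y" unfolding R_def using uf_Int[OF uy a b] .
  then have Rinf: "infinite R" using free_infinite[OF fy] by blast
  show ?thesis
  proof (rule set_eqI)
    fix k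
    have "\<not> R \<subseteq> lenp -` {..k}" using Rinf finite_lenp_vimage[of "{..k}"] finite_subset by blast
    then obtain m where m: "m \<in> R" "lenp m > k" by force
    then obtain n n' where nn: "m = br x n" "m = br x' n'" unfolding R_def by blast
    then have "n = n'" using lenp_br by metis
    then have "br x n = br x' n" using nn by simp
    moreover have "k < n" using m(2) nn(1) lenp_br by simp
    ultimately show "k \<in> x \<longleftrightarrow> k \<in> x'" by (rule br_eq)
  qed
qed

definition Ob :: "nat set set set \<Rightarrow> nat set \<Rightarrow> nat set set set" where
  "Ob X A = {z \<in> X. A \<in> z}"

definition fD :: "nat set set set \<Rightarrow> real" where
  "fD G = (if G \<in> range Dn then real (card G) else 0)"

lemma openin_Ob: "X \<subseteq> beta_omega \<Longrightarrow> openin (subtopology beta_omega_top X) (Ob X A)"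
  unfolding Ob_def using openin_sub_bo bo_X_eq by metis

lemma vt_topspace: "topspace (vietoris T) = CL T"
proof -
  let ?G = "{{F \<in> CL T. F \<subseteq> U} | U. openin T U} \<union> {{F \<in> CL T. F \<inter> U \<noteq> {}} | U. openin T U}"
  have "\<Union>?G = CL T"
  proof
    show "\<Union>?G \<subseteq> CL T" by blast
    show "CL T \<subseteq> \<Union>?G"
    proof
      fix F assume F: "F \<in> CL T"
      then have "F \<subseteq> topspace T" unfolding CL_def using closedin_subset by blast
      then have "F \<in> {F \<in> CL T. F \<subseteq> topspace T}" using F by blast
      moreover have "{F \<in> CL T. F \<subseteq> topspace T} \<in> ?G" using openin_topspace[of T] by blast
      ultimately show "F \<in> \<Union>?G" by (rule UnionI[rotated])
    qed
  qed
  then show ?thesis unfolding vietoris_def topology_generated_by_topspace .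
qed

lemma vt_UP: "openin T U \<Longrightarrow> openin (vietoris T) {F \<in> CL T. F \<subseteq> U}"
  unfolding vietoris_def openin_topology_generated_by_iff
  by (rule generate_topology_on.Basis) blast

lemma vt_HIT: "openin T U \<Longrightarrow> openin (vietoris T) {F \<in> CL T. F \<inter> U \<noteq> {}}"
  unfolding vietoris_def openin_topology_generated_by_iff
  by (rule generate_topology_on.Basis) blast

lemma X_uf: "X \<subseteq> beta_omega \<Longrightarrow> z \<in> X \<Longrightarrow> uf z"
  unfolding beta_omega_def by blast

lemma CL_sub: "X \<subseteq> beta_omega \<Longrightarrow> G \<in> CL (subtopology beta_omega_top X) \<Longrightarrow> G \<subseteq> X"
  unfolding CL_def using closedin_subset topspace_sub by blast

lemma Dn_CL:
  assumes Xsub: "X \<subseteq> beta_omega" and Xom: "omega_pts \<subseteq> X"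
  shows "Dn n \<in> CL (subtopology beta_omega_top X)"
proof -
  let ?T = "subtopology beta_omega_top X"
  have sub: "Dn n \<subseteq> topspace ?T" using Dn_omega Xom topspace_sub[OF Xsub] by blast
  have "topspace ?T - Dn n = Ob X (- Jn n)"
  proof (rule set_eqI)
    fix z
    show "z \<in> topspace ?T - Dn n \<longleftrightarrow> z \<in> Ob X (- Jn n)"
    proof
      assume z: "z \<in> topspace ?T - Dn n"
      then have zX: "z \<in> X" using topspace_sub[OF Xsub] by blast
      have uz: "uf z" using X_uf[OF Xsub zX] .
      have "Jn n \<notin> z"
      proof
        assume "Jn n \<in> z"
        then obtain a where "a \<in> Jn n" "z = principal_uf a" using uf_finite_principal[OF uz finite_Jn] by blast
        then show False using z unfolding Dn_def by blast
      qed
      then show "z \<in> Ob X (- Jn n)" unfolding Ob_def using uf_compl[OF uz] zX by blast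
    next
      assume z: "z \<in> Ob X (- Jn n)"
      then have zX: "z \<in> X" and c: "- Jn n \<in> z" unfolding Ob_def by auto
      have "z \<notin> Dn n"
      proof
        assume "z \<in> Dn n"
        then obtain a where "a \<in> Jn n" "z = principal_uf a" unfolding Dn_def by blast
        then show False using c by simp
      qed
      then show "z \<in> topspace ?T - Dn n" using zX topspace_sub[OF Xsub] by blast
    qed
  qed
  then have "openin ?T (topspace ?T - Dn n)" using openin_Ob[OF Xsub] by simp
  then have "closedin ?T (Dn n)" using sub closedin_def by blast
  then show ?thesis unfolding CL_def using Dn_ne by blast
qed

lemma Dn_principal_iff: "z \<in> Dn n \<longleftrightarrow> (\<exists>a. z = principal_uf a \<and> lenp a = n)"
  unfolding Dn_def Jn_def by blast

lemma loc_const: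
  assumes Xsub: "X \<subseteq> beta_omega" and Xom: "omega_pts \<subseteq> X"
    and H: "\<And>r. free_uf r \<Longrightarrow> (card_of {y \<in> X. free_uf y \<and> uf_image lenp y = r}, card_of (UNIV :: nat set set)) \<in> ordLess"
    and G: "G \<in> CL (subtopology beta_omega_top X)"
  shows "\<exists>W. openin (vietoris (subtopology beta_omega_top X)) W \<and> G \<in> W \<and> (\<forall>G'\<in>W. fD G' = fD G)"
proof -
  let ?T = "subtopology beta_omega_top X"
  let ?V = "vietoris ?T"
  let ?UP = "\<lambda>U. {F \<in> CL ?T. F \<subseteq> U}"
  let ?HIT = "\<lambda>U. {F \<in> CL ?T. F \<inter> U \<noteq> {}}"
  have oUP: "openin ?V (?UP (Ob X A))" for A using vt_UP openin_Ob[OF Xsub] by blast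
  have oHIT: "openin ?V (?HIT (Ob X A))" for A using vt_HIT openin_Ob[OF Xsub] by blast
  have GX: "G \<subseteq> X" using CL_sub[OF Xsub G] .
  have Gne: "G \<noteq> {}" using G unfolding CL_def by blast
  have princX: "principal_uf a \<in> X" for a using Xom unfolding omega_pts_def by blast
  have finish: "\<exists>W. openin ?V W \<and> G \<in> W \<and> (\<forall>G'\<in>W. fD G' = fD G)"
    if nD: "G \<notin> range Dn" and W: "openin ?V W" "G \<in> W" "\<forall>G'\<in>W. G' \<notin> range Dn" for W
  proof -
    have "\<forall>G'\<in>W. fD G' = fD G" using nD W(3) unfolding fD_def by simp
    then show ?thesis using W by blast
  qed
  show ?thesis
  proof (cases "G \<in> range Dn")
    case True
    then obtain k where k: "G = Dn k" by blast
    define W where "W = ?UP (Ob X (Jn k)) \<inter> \<Inter> ((\<lambda>m. ?HIT (Ob X {m})) ` Jn k)"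
    have "openin ?V W" unfolding W_def
      by (intro openin_Int oUP openin_Inter) (auto simp: finite_Jn Jn_ne oHIT)
    moreover have "G \<in> W"
    proof -
      have "G \<in> ?UP (Ob X (Jn k))" using G k princX unfolding Ob_def Dn_def by auto
      moreover have "G \<in> ?HIT (Ob X {m})" if mJ: "m \<in> Jn k" for m
      proof -
        have "principal_uf m \<in> G \<inter> Ob X {m}" using mJ k princX unfolding Ob_def Dn_def by auto
        then show ?thesis using G by blast
      qed
      ultimately show ?thesis unfolding W_def by blast
    qed
    moreover have "\<forall>G'\<in>W. fD G' = fD G"
    proof
      fix G' assume G': "G' \<in> W"
      have "G' = Dn k"
      proof
        show "G' \<subseteq> Dn k"
        proof
          fix z assume "z \<in> G'"
          then have z: "z \<in> X" "Jn k \<in> z" using G' unfolding W_def Ob_def by auto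
          obtain a where "a \<in> Jn k" "z = principal_uf a" using uf_finite_principal[OF X_uf[OF Xsub z(1)] finite_Jn z(2)] by blast
          then show "z \<in> Dn k" unfolding Dn_def by blast
        qed
        show "Dn k \<subseteq> G'"
        proof
          fix z assume "z \<in> Dn k"
          then obtain m where m: "m \<in> Jn k" "z = principal_uf m" unfolding Dn_def by blast
          then have "G' \<in> ?HIT (Ob X {m})" using G' unfolding W_def by blast
          then obtain z' where z': "z' \<in> G'" "z' \<in> X" "{m} \<in> z'" unfolding Ob_def by blast
          then have "z' = principal_uf m" using uf_singleton X_uf[OF Xsub] by blast
          then show "z \<in> G'" using z' m by simp
        qed
      qed
      then show "fD G' = fD G" using k by simp
    qed
    ultimately show ?thesis by blast
  next
    case nD: False
    show ?thesis
    proof (cases "G \<inter> omega_pts = {}")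
      case False
      then obtain m where m: "principal_uf m \<in> G" unfolding omega_pts_def by blast
      define n where "n = lenp m"
      have pmD: "principal_uf m \<in> Dn n" unfolding n_def using principal_in_Dn by simp
      have Gm: "G \<in> ?HIT (Ob X {m})" using m G princX unfolding Ob_def by auto
      have HITm: "G' = Dn n" if h1: "G' \<in> ?HIT (Ob X {m})" and h2: "G' \<in> range Dn" for G'
      proof -
        obtain n' where n': "G' = Dn n'" using h2 by blast
        obtain z where z: "z \<in> G'" "z \<in> X" "{m} \<in> z" using h1 unfolding Ob_def by blast
        then have "z = principal_uf m" using uf_singleton X_uf[OF Xsub] by blast
        then have "lenp m = n'" using z(1) n' principal_in_Dn by simp
        then show ?thesis using n' n_def by simp
      qed
      have "G \<noteq> Dn n" using nD by blast
      then consider (a) "\<exists>z\<in>G. z \<notin> Dn n" | (b) "\<exists>z\<in>Dn n. z \<notin> G" by blast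
      then show ?thesis
      proof cases
        case a
        then obtain z where z: "z \<in> G" "z \<notin> Dn n" by blast
        have zX: "z \<in> X" using z GX by blast
        have "Jn n \<notin> z"
        proof
          assume "Jn n \<in> z"
          then obtain a where "a \<in> Jn n" "z = principal_uf a"
            using uf_finite_principal[OF X_uf[OF Xsub zX] finite_Jn] by blast
          then show False using z unfolding Dn_def by blast
        qed
        then have "z \<in> Ob X (- Jn n)" using uf_compl[OF X_uf[OF Xsub zX]] zX unfolding Ob_def by blast
        then have G2: "G \<in> ?HIT (Ob X (- Jn n))" using G z by blast
        define W where "W = ?HIT (Ob X {m}) \<inter> ?HIT (Ob X (- Jn n))"
        have "\<forall>G'\<in>W. G' \<notin> range Dn"
        proof (intro ballI notI)
          fix G' assume G': "G' \<in> W" "G' \<in> range Dn"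
          then have e: "G' = Dn n" using HITm unfolding W_def by blast
          obtain z' where "z' \<in> G'" "- Jn n \<in> z'" using G' unfolding W_def Ob_def by blast
          then obtain a where "a \<in> Jn n" "z' = principal_uf a" using e unfolding Dn_def by blast
          then show False using \<open>- Jn n \<in> z'\<close> by simp
        qed
        moreover have "openin ?V W" unfolding W_def using oHIT by (intro openin_Int)
        moreover have "G \<in> W" unfolding W_def using Gm G2 by blast
        ultimately show ?thesis using finish nD by blast
      next
        case b
        then obtain z where z: "z \<in> Dn n" "z \<notin> G" by blast
        then obtain j where j: "z = principal_uf j" "lenp j = n" using Dn_principal_iff by blast
        have G2: "G \<in> ?UP (Ob X (- {j}))"
        proof -
          have "y \<in> Ob X (- {j})" if yG: "y \<in> G" for y
          proof -
            have yX: "y \<in> X" using yG GX by blast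
            have "{j} \<notin> y"
            proof
              assume "{j} \<in> y"
              then have "y = principal_uf j" using uf_singleton X_uf[OF Xsub yX] by blast
              then show False using z j yG by simp
            qed
            then show ?thesis using uf_compl[OF X_uf[OF Xsub yX]] yX unfolding Ob_def by blast
          qed
          then show ?thesis using G by blast
        qed
        define W where "W = ?HIT (Ob X {m}) \<inter> ?UP (Ob X (- {j}))"
        have "\<forall>G'\<in>W. G' \<notin> range Dn"
        proof (intro ballI notI)
          fix G' assume G': "G' \<in> W" "G' \<in> range Dn"
          then have e: "G' = Dn n" using HITm unfolding W_def by blast
          then have "principal_uf j \<in> G'" using j principal_in_Dn by simp
          then have "- {j} \<in> principal_uf j" using G' unfolding W_def Ob_def by blast
          then show False by simp
        qed
        moreover have "openin ?V W" unfolding W_def using oHIT oUP by (intro openin_Int)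
        moreover have "G \<in> W" unfolding W_def using Gm G2 by blast
        ultimately show ?thesis using finish nD by blast
      qed
    next
      case True
      have Gfree: "free_uf y" if yG: "y \<in> G" for y
      proof -
        have "y \<in> X" "y \<notin> omega_pts" using yG GX True by auto
        then show ?thesis using free_ufI X_uf[OF Xsub] by blast
      qed
      obtain y0 where y0: "y0 \<in> G" using Gne by blast
      define r0 where "r0 = uf_image lenp y0"
      have y0X: "y0 \<in> X" using y0 GX by blast
      have ur0: "uf r0" unfolding r0_def using uf_image_uf X_uf[OF Xsub y0X] by blast
      have fr0: "free_uf r0" unfolding r0_def using free_image_lenp Gfree y0 by blast
      show ?thesis
      proof (cases "\<forall>y\<in>G. uf_image lenp y = r0")
        case False
        then obtain y where y: "y \<in> G" "uf_image lenp y \<noteq> r0" by blast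
        have yX: "y \<in> X" using y GX by blast
        have uy: "uf y" using X_uf[OF Xsub yX] .
        have uy0: "uf y0" using X_uf[OF Xsub y0X] .
        have "\<not> r0 \<subseteq> uf_image lenp y"
          using uf_maximal[OF ur0 uf_image_uf[OF uy]] y(2) by blast
        then obtain B where B: "B \<in> r0" "B \<notin> uf_image lenp y" by blast
        have "- B \<in> uf_image lenp y" using uf_compl[OF uf_image_uf[OF uy] B(2)] .
        then have yB: "lenp -` (- B) \<in> y" using uf_image_mem[OF uy] by blast
        have y0B: "lenp -` B \<in> y0" using B(1) uf_image_mem[OF uy0] unfolding r0_def by blast
        define W where "W = ?HIT (Ob X (lenp -` B)) \<inter> ?HIT (Ob X (lenp -` (- B)))"
        have "\<forall>G'\<in>W. G' \<notin> range Dn"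
        proof (intro ballI notI)
          fix G' assume G': "G' \<in> W" "G' \<in> range Dn"
          then obtain n where n: "G' = Dn n" by blast
          obtain z1 where z1: "z1 \<in> G'" "lenp -` B \<in> z1" using G' unfolding W_def Ob_def by blast
          obtain z2 where z2: "z2 \<in> G'" "lenp -` (- B) \<in> z2" using G' unfolding W_def Ob_def by blast
          obtain a1 where a1: "z1 = principal_uf a1" "lenp a1 = n" using z1 n Dn_principal_iff by blast
          obtain a2 where a2: "z2 = principal_uf a2" "lenp a2 = n" using z2 n Dn_principal_iff by blast
          have "n \<in> B" using z1 a1 by simp
          moreover have "n \<notin> B" using z2 a2 by simp
          ultimately show False by blast
        qed
        moreover have "openin ?V W" unfolding W_def using oHIT by (intro openin_Int)
        moreover have "G \<in> W"
        proof -
          have "y0 \<in> G \<inter> Ob X (lenp -` B)" using y0 y0X y0B unfolding Ob_def by blast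
          moreover have "y \<in> G \<inter> Ob X (lenp -` (- B))" using y yX yB unfolding Ob_def by blast
          ultimately show ?thesis unfolding W_def using G by blast
        qed
        ultimately show ?thesis using finish nD by blast
      next
        case allr: True
        define Y where "Y = {y \<in> X. free_uf y \<and> uf_image lenp y = r0}"
        have GY: "G \<subseteq> Y" unfolding Y_def using GX Gfree allr by blast
        have cY: "(card_of Y, card_of (UNIV :: nat set set)) \<in> ordLess" unfolding Y_def using H[OF fr0] .
        define bad where "bad = {x :: nat set. \<exists>y\<in>Y. range (br x) \<in> y}"
        define c where "c x = (SOME y. y \<in> Y \<and> range (br x) \<in> y)" for x
        have c: "c x \<in> Y \<and> range (br x) \<in> c x" if "x \<in> bad" for x
          using that unfolding bad_def c_def by (metis (mono_tags, lifting) mem_Collect_eq someI_ex)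
        have "inj_on c bad"
        proof (rule inj_onI)
          fix x x' assume xx: "x \<in> bad" "x' \<in> bad" "c x = c x'"
          have "free_uf (c x)" using c[OF xx(1)] unfolding Y_def by blast
          moreover have "range (br x) \<in> c x" using c[OF xx(1)] by blast
          moreover have "range (br x') \<in> c x" using c[OF xx(2)] xx(3) by simp
          ultimately show "x = x'" by (rule branch_unique)
        qed
        moreover have "c ` bad \<subseteq> Y" using c by blast
        ultimately have "(card_of bad, card_of Y) \<in> ordLeq" using card_of_ordLeq by blast
        then have cb: "(card_of bad, card_of (UNIV :: nat set set)) \<in> ordLess" using cY ordLeq_ordLess_trans by blast
        have "bad \<noteq> UNIV"
        proof
          assume "bad = UNIV"
          then have "(card_of (UNIV :: nat set set), card_of (UNIV :: nat set set)) \<in> ordLess" using cb by simp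
          then show False using ordLess_irreflexive by blast
        qed
        then obtain x where x: "x \<notin> bad" by blast
        define A where "A = range (br x)"
        have G2: "G \<in> ?UP (Ob X (- A))"
        proof -
          have "y \<in> Ob X (- A)" if yG: "y \<in> G" for y
          proof -
            have "y \<in> Y" using yG GY by blast
            then have "A \<notin> y" using x unfolding bad_def A_def by blast
            moreover have yX: "y \<in> X" using yG GX by blast
            ultimately show ?thesis using uf_compl[OF X_uf[OF Xsub yX]] unfolding Ob_def by blast
          qed
          then show ?thesis using G by blast
        qed
        define W where "W = ?UP (Ob X (- A))"
        have "\<forall>G'\<in>W. G' \<notin> range Dn"
        proof (intro ballI notI)
          fix G' assume G': "G' \<in> W" "G' \<in> range Dn"
          then obtain n where n: "G' = Dn n" by blast
          have "principal_uf (br x n) \<in> G'" using n principal_in_Dn lenp_br by simp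
          then have "- A \<in> principal_uf (br x n)" using G' unfolding W_def Ob_def by blast
          then show False unfolding A_def by simp
        qed
        moreover have "openin ?V W" unfolding W_def using oUP .
        moreover have "G \<in> W" unfolding W_def using G2 .
        ultimately show ?thesis using finish nD by blast
      qed
    qed
  qed
qed

lemma part_b:
  assumes Xsub: "X \<subseteq> beta_omega" and Xom: "omega_pts \<subseteq> X"
    and H: "\<And>r. free_uf r \<Longrightarrow> (card_of {y \<in> X. free_uf y \<and> uf_image lenp y = r}, card_of (UNIV :: nat set set)) \<in> ordLess"
  shows "\<not> pseudocompact (vietoris (subtopology beta_omega_top X))"
proof -
  let ?T = "subtopology beta_omega_top X"
  let ?V = "vietoris ?T"
  have cont: "continuous_map ?V euclideanreal fD"
    unfolding continuous_map_def
  proof (intro conjI allI impI)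
    show "fD \<in> topspace ?V \<rightarrow> topspace euclideanreal" by simp
    fix U :: "real set" assume "openin euclideanreal U"
    show "openin ?V {x \<in> topspace ?V. fD x \<in> U}"
    proof (subst openin_subopen, intro ballI)
      fix G assume G: "G \<in> {x \<in> topspace ?V. fD x \<in> U}"
      then have GCL: "G \<in> CL ?T" using vt_topspace by blast
      obtain W where W: "openin ?V W" "G \<in> W" "\<forall>G'\<in>W. fD G' = fD G"
        using loc_const[OF Xsub Xom H GCL] by blast
      have Wt: "W \<subseteq> topspace ?V" by (rule openin_subset[OF W(1)])
      have fG: "fD G \<in> U" using G by blast
      have "W \<subseteq> {x \<in> topspace ?V. fD x \<in> U}"
      proof
        fix G' assume G': "G' \<in> W"
        then have "fD G' \<in> U" using W(3) fG by simp
        then show "G' \<in> {x \<in> topspace ?V. fD x \<in> U}" using G' Wt by blast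
      qed
      then show "\<exists>T. openin ?V T \<and> G \<in> T \<and> T \<subseteq> {x \<in> topspace ?V. fD x \<in> U}" using W by blast
    qed
  qed
  have "\<not> bounded (fD ` topspace ?V)"
  proof
    assume "bounded (fD ` topspace ?V)"
    then obtain a where a: "\<forall>x\<in>fD ` topspace ?V. norm x \<le> a" unfolding bounded_iff by blast
    define n where "n = nat \<lceil>a\<rceil>"
    have "a \<le> real n" unfolding n_def by linarith
    also have "real n < real ((2::nat) ^ n)" using less_exp[of n] by (simp only: of_nat_less_iff)
    also have "real ((2::nat) ^ n) = (2::real) ^ n" by simp
    finally have lt: "a < 2 ^ n" .
    have "Dn n \<in> topspace ?V" using Dn_CL[OF Xsub Xom] vt_topspace by blast
    moreover have "fD (Dn n) = 2 ^ n" unfolding fD_def using card_Dn by simp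
    ultimately have "norm ((2::real) ^ n) \<le> a" using a by (metis image_eqI)
    then show False using lt by simp
  qed
  then show ?thesis unfolding pseudocompact_def using cont by (intro notI) (drule spec[of _ fD], simp)
qed

lemma fun_inj_real: "\<exists>g :: (nat \<Rightarrow> nat) \<Rightarrow> real. inj g"
proof -
  define gr where "gr f = range (\<lambda>n. prod_encode (n, f n))" for f :: "nat \<Rightarrow> nat"
  have "inj gr"
  proof (rule injI)
    fix f f' assume e: "gr f = gr f'"
    show "f = f'"
    proof
      fix n
      have "prod_encode (n, f n) \<in> gr f'" using e unfolding gr_def by blast
      then obtain n' where "prod_encode (n, f n) = prod_encode (n', f' n')" unfolding gr_def by blast
      then have "(n, f n) = (n', f' n')" by (rule prod_encode_eq[THEN iffD1])
      then show "f n = f' n" by auto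
    qed
  qed
  moreover obtain b :: "nat set \<Rightarrow> real" where "bij_betw b UNIV UNIV"
    using nat_sets_eqpoll_reals unfolding eqpoll_def by blast
  ultimately have "inj (b \<circ> gr)" by (simp add: bij_betw_def inj_compose)
  then show ?thesis by blast
qed

lemma under_small:
  "(card_of (under (card_of (UNIV :: real set)) e), card_of (UNIV :: real set)) \<in> ordLess"
proof -
  let ?r = "card_of (UNIV :: real set)"
  have inf: "\<not> finite (UNIV :: real set)" by (simp add: infinite_UNIV_char_0)
  have e: "e \<in> Field ?r" by (simp add: Field_card_of)
  have "(card_of (underS ?r e), ?r) \<in> ordLess" using card_of_underS[OF card_of_Card_order e] .
  moreover have "(card_of {e}, card_of (UNIV :: real set)) \<in> ordLess"
    by (rule finite_ordLess_infinite[OF card_of_Well_order card_of_Well_order, unfolded Field_card_of]) (simp_all add: inf)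
  ultimately have "(card_of ({e} \<union> underS ?r e), card_of (UNIV :: real set)) \<in> ordLess"
    using card_of_Un_ordLess_infinite[OF inf] by blast
  moreover have "under ?r e \<subseteq> {e} \<union> underS ?r e" unfolding under_def underS_def by blast
  ultimately show ?thesis using card_of_mono1 ordLeq_ordLess_trans by blast
qed

theorem mainTheorem8:
  assumes "regularCard (card_of (UNIV :: real set))"
    and "\<exists>Q. (card_of Q, card_of (UNIV :: real set)) \<in> ordIso \<and> (\<forall>q\<in>Q. selective q) \<and>
              (\<forall>q0\<in>Q. \<forall>q1\<in>Q. q0 \<noteq> q1 \<longrightarrow> incomparable q0 q1)"
  shows "\<exists>X. omega_pts \<subseteq> X \<and> X \<subseteq> beta_omega \<and>
           (\<forall>I :: real set. (card_of I, card_of (UNIV :: real set)) \<in> ordLess \<longrightarrow>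
              rel_countably_compact
                (product_topology (\<lambda>_. subtopology beta_omega_top X) I)
                (PiE I (\<lambda>_. omega_pts))) \<and>
           \<not> pseudocompact (vietoris (subtopology beta_omega_top X))"
proof -
  let ?r = "card_of (UNIV :: real set)"
  obtain Q where Q: "(card_of Q, ?r) \<in> ordIso" "\<forall>q\<in>Q. selective q"
    "\<forall>q0\<in>Q. \<forall>q1\<in>Q. q0 \<noteq> q1 \<longrightarrow> incomparable q0 q1" using assms(2) by (elim exE conjE)
  have "(?r, card_of Q) \<in> ordIso" by (rule ordIso_symmetric[OF Q(1)])
  then have "\<exists>p. bij_betw p (UNIV :: real set) Q" by (rule card_of_ordIso[THEN iffD2])
  then obtain p where p: "bij_betw p (UNIV :: real set) Q" by (elim exE)
  have pQ: "p e \<in> Q" for e using p bij_betwE by blast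
  have psel: "selective (p e)" for e using pQ Q(2) by blast
  have pinj: "p e = p e' \<Longrightarrow> e = e'" for e e' using p unfolding bij_betw_def inj_def by blast
  have pfree: "free_uf (p e)" for e using psel selective_free by blast
  have puf: "uf (p e)" for e using pfree free_uf_uf by blast
  obtain g :: "(nat \<Rightarrow> nat) \<Rightarrow> real" where g: "inj g" using fun_inj_real by blast
  define H where "H = inv g"
  have Hg: "H (g f) = f" for f unfolding H_def using g by simp
  define X where "X = omega_pts \<union> {uf_image (H b) (p e) | b e. (b, e) \<in> ?r}"
  have Xom: "omega_pts \<subseteq> X" unfolding X_def by blast
  have Xsub: "X \<subseteq> beta_omega"
  proof
    fix z assume "z \<in> X"
    then show "z \<in> beta_omega"
    proof (cases "z \<in> omega_pts")
      case True then show ?thesis using omega_sub_beta by blast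
    next
      case False
      then obtain b e where "z = uf_image (H b) (p e)" using \<open>z \<in> X\<close> unfolding X_def by blast
      then show ?thesis unfolding beta_omega_def using uf_image_uf[OF puf] by simp
    qed
  qed
  have wo: "wo_rel ?r" unfolding wo_rel_def by (rule card_of_Well_order)
  have A: "rel_countably_compact (product_topology (\<lambda>_. subtopology beta_omega_top X) I) (PiE I (\<lambda>_. omega_pts))"
    if I: "(card_of I, ?r) \<in> ordLess" for I :: "real set"
  proof (rule part_a[OF Xsub Xom])
    fix h :: "real \<Rightarrow> nat \<Rightarrow> nat"
    define B where "B = (\<lambda>i. g (h i)) ` I"
    have "(card_of B, card_of I) \<in> ordLeq" unfolding B_def by (rule card_of_image)
    then have Bs: "(card_of B, ?r) \<in> ordLess" using I ordLeq_ordLess_trans by blast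
    have "\<not> cofinal B ?r"
    proof
      assume "cofinal B ?r"
      moreover have "B \<subseteq> Field ?r" by (simp add: Field_card_of)
      ultimately have "(card_of B, ?r) \<in> ordIso" using assms(1) unfolding regularCard_def by blast
      then show False using Bs not_ordLess_ordIso by blast
    qed
    then obtain a where a: "a \<in> Field ?r" "\<forall>b\<in>B. a = b \<or> (a, b) \<notin> ?r" unfolding cofinal_def by blast
    have ba: "(b, a) \<in> ?r" if bB: "b \<in> B" for b
    proof -
      have t: "(a, b) \<in> ?r \<or> (b, a) \<in> ?r" using wo_rel.TOTALS[OF wo] by (simp add: Field_card_of)
      show ?thesis
      proof (cases "a = b")
        case True then show ?thesis using t by simp
      next
        case False then show ?thesis using t a(2) bB by blast
      qed
    qed
    have "\<forall>i\<in>I. uf_image (h i) (p a) \<in> X"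
    proof
      fix i assume "i \<in> I"
      then have "(g (h i), a) \<in> ?r" using ba unfolding B_def by blast
      moreover have "uf_image (h i) (p a) = uf_image (H (g (h i))) (p a)" using Hg by simp
      ultimately show "uf_image (h i) (p a) \<in> X" unfolding X_def by blast
    qed
    then show "\<exists>q. free_uf q \<and> (\<forall>i\<in>I. uf_image (h i) q \<in> X)" using pfree by blast
  qed
  have Hc: "(card_of {y \<in> X. free_uf y \<and> uf_image lenp y = r}, card_of (UNIV :: nat set set)) \<in> ordLess"
    if fr: "free_uf r" for r
  proof -
    define Y where "Y = {y \<in> X. free_uf y \<and> uf_image lenp y = r}"
    have Yform: "\<exists>b e. y = uf_image (H b) (p e) \<and> (b, e) \<in> ?r \<and> uf_image (lenp \<circ> H b) (p e) = r"
      if yY: "y \<in> Y" for y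
    proof -
      have "y \<notin> omega_pts" using yY free_not_principal unfolding Y_def by blast
      then obtain b e where be: "y = uf_image (H b) (p e)" "(b, e) \<in> ?r" using yY unfolding Y_def X_def by blast
      then have "uf_image (lenp \<circ> H b) (p e) = r" using yY unfolding Y_def by (simp add: uf_image_comp)
      then show ?thesis using be by blast
    qed
    obtain e0 where e0: "Y \<subseteq> (\<lambda>b. uf_image (H b) (p e0)) ` under ?r e0"
    proof (cases "Y = {}")
      case True then show ?thesis using that by blast
    next
      case False
      then obtain y0 where "y0 \<in> Y" by blast
      then obtain b0 e0 where be0: "(b0, e0) \<in> ?r" "uf_image (lenp \<circ> H b0) (p e0) = r" using Yform by blast
      have "Y \<subseteq> (\<lambda>b. uf_image (H b) (p e0)) ` under ?r e0"
      proof
        fix y assume "y \<in> Y"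
        then obtain b e where be: "y = uf_image (H b) (p e)" "(b, e) \<in> ?r" "uf_image (lenp \<circ> H b) (p e) = r"
          using Yform by blast
        have "e = e0"
        proof (rule ccontr)
          assume ne: "e \<noteq> e0"
          have "uf_image (lenp \<circ> H b0) (p e0) = uf_image (lenp \<circ> H b) (p e)" using be0 be by simp
          moreover have "free_uf (uf_image (lenp \<circ> H b0) (p e0))" using be0 fr by simp
          ultimately obtain f where "bij f" "uf_image f (p e0) = p e"
            using key_lemma[OF psel psel] by blast
          moreover have "p e0 \<noteq> p e" using ne pinj by metis
          then have "incomparable (p e0) (p e)" using Q(3) pQ by blast
          ultimately show False unfolding incomparable_def by blast
        qed
        then show "y \<in> (\<lambda>b. uf_image (H b) (p e0)) ` under ?r e0" using be unfolding under_def by blast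
      qed
      then show ?thesis using that by blast
    qed
    have "(card_of Y, card_of ((\<lambda>b. uf_image (H b) (p e0)) ` under ?r e0)) \<in> ordLeq"
      using e0 by (rule card_of_mono1)
    moreover have "(card_of ((\<lambda>b. uf_image (H b) (p e0)) ` under ?r e0), card_of (under ?r e0)) \<in> ordLeq"
      by (rule card_of_image)
    ultimately have "(card_of Y, card_of (under ?r e0)) \<in> ordLeq" using ordLeq_transitive by blast
    then have "(card_of Y, ?r) \<in> ordLess" using under_small ordLeq_ordLess_trans by blast
    moreover have "(?r, card_of (UNIV :: nat set set)) \<in> ordIso"
      using nat_sets_eqpoll_reals unfolding eqpoll_iff_card_of_ordIso using ordIso_symmetric by blast
    ultimately show ?thesis unfolding Y_def using ordLess_ordIso_trans by blast
  qed
  have B: "\<not> pseudocompact (vietoris (subtopology beta_omega_top X))"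
    using part_b[OF Xsub Xom Hc] by blast
  show ?thesis using Xom Xsub A B by blast
qed

end
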